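(* Let $\mathcal S\subseteq\mathbb R^n$ be a convex set whose recession cone $\mathbf K:=\mathrm{rec.cone}(\mathcal S)$ is regular, and let $\Psi:=\Psi_{\mathbf K,\|\cdot\|_2}$. Then for every $\hat x\in\mathcal S$, $$\inf_{x\in\mathcal S\cap\mathbb Z^n}\|x-\hat x\|_2\le \frac{\sqrt n}{2}\Big(\frac1{\Psi}+1\Big),$$ and in fact there exists $x\in\mathcal S\cap\mathbb Z^n$ attaining $\|x-\hat x\|_2\le\frac{\sqrt n}{2}(\frac1\Psi+1)$. Moreover, if $\alpha\in\mathbb R^n$ and $\hat z:=\inf\{\alpha^Tx:x\in\mathcal S\}>-\infty$, then $$\inf\{\alpha^Tx:x\in\mathcal S\cap\mathbb Z^n\}-\hat z\le\|\alpha\|_2\frac{\sqrt n}{2}\Big(\frac1{\Psi}+1\Big).$$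
   Context: The recession cone of a convex set $\mathcal S$ is $\mathrm{rec.cone}(\mathcal S)=\{d: x+\lambda d\in\mathcal S\ \forall\lambda\ge0,\ \forall x\in\mathcal S\}$. A cone is regular if it is full-dimensional, closed, convex and pointed. For a regular cone $\mathbf K$ with dual cone $\mathbf K_*=\{x: x^Ty\ge0\ \forall y\in\mathbf K\}$, $\Psi_{\mathbf K,\|\cdot\|_2}:=\max_{d\in\mathbf K,\|d\|_2=1}\min_{f\in\mathbf K_*,\|f\|_2=1}f^Td$. *)

theory Defs
  imports "HOL-Analysis.Analysis"
begin

definition rec_cone :: "('a::real_vector) set \<Rightarrow> 'a set" where
  "rec_cone S = {d. \<forall>x\<in>S. \<forall>t::real. t \<ge> 0 \<longrightarrow> x + t *\<^sub>R d \<in> S}"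

definition regular_cone :: "('a::euclidean_space) set \<Rightarrow> bool" where
  "regular_cone K \<longleftrightarrow> cone K \<and> interior K \<noteq> {} \<and> closed K \<and> convex K \<and>
     K \<inter> uminus ` K = {0}"

definition dual_cone :: "('a::euclidean_space) set \<Rightarrow> 'a set" where
  "dual_cone K = {x. \<forall>y\<in>K. x \<bullet> y \<ge> 0}"

definition Psi :: "('a::euclidean_space) set \<Rightarrow> real" where
  "Psi K = (SUP d\<in>{d\<in>K. norm d = 1}. (INF f\<in>{f\<in>dual_cone K. norm f = 1}. f \<bullet> d))"

definition int_points :: "(real^'n) set" where
  "int_points = {x. \<forall>i. x $ i \<in> \<int>}"

end

theory Submission
  imports Defs
begin

lemma dual_exists:
  fixes K :: "'a::euclidean_space set"
  assumes "cone K" "closed K" "convex K" "K \<noteq> {}" "z \<notin> K"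
  shows "\<exists>f\<in>dual_cone K. norm f = 1 \<and> f \<bullet> z < 0"
proof -
  obtain a b where ab: "a \<bullet> z < b" "\<forall>x\<in>K. b < a \<bullet> x"
    using separating_hyperplane_closed_point[OF assms(3,2,5)] by blast
  have "0 \<in> K" using cone_contains_0[OF assms(1)] assms(4) by simp
  then have b0: "b < 0" using ab(2) by fastforce
  have ak: "a \<bullet> x \<ge> 0" if "x \<in> K" for x
  proof (rule ccontr)
    assume "\<not> a \<bullet> x \<ge> 0"
    then have neg: "a \<bullet> x < 0" by simp
    define c where "c = b / (a \<bullet> x)"
    have "c > 0" using neg b0 by (simp add: c_def divide_neg_neg)
    then have "c *\<^sub>R x \<in> K" using assms(1) that by (simp add: cone_def)
    then have "b < a \<bullet> (c *\<^sub>R x)" using ab by blast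
    also have "a \<bullet> (c *\<^sub>R x) = b" using neg by (simp add: c_def)
    finally show False by simp
  qed
  have an: "a \<noteq> 0" using ab b0 by auto
  define f where "f = a /\<^sub>R norm a"
  have "f \<in> dual_cone K" using ak an by (simp add: f_def dual_cone_def)
  moreover have "norm f = 1" using an by (simp add: f_def)
  moreover have "f \<bullet> z < 0" using ab b0 an
    by (simp add: f_def mult_pos_neg)
  ultimately show ?thesis by blast
qed

lemma cone_ball:
  fixes K :: "'a::euclidean_space set"
  assumes "cone K" "closed K" "convex K" "K \<noteq> {}"
    and "\<And>f. f \<in> dual_cone K \<Longrightarrow> norm f = 1 \<Longrightarrow> f \<bullet> d \<ge> \<rho>"
  shows "cball d \<rho> \<subseteq> K"
proof
  fix z assume z: "z \<in> cball d \<rho>"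
  show "z \<in> K"
  proof (rule ccontr)
    assume "z \<notin> K"
    then obtain f where f: "f \<in> dual_cone K" "norm f = 1" "f \<bullet> z < 0"
      using dual_exists assms(1-4) by blast
    have "f \<bullet> d \<ge> \<rho>" using assms(5) f by blast
    have "\<bar>f \<bullet> (z - d)\<bar> \<le> norm f * norm (z - d)" by (rule Cauchy_Schwarz_ineq2)
    also have "\<dots> \<le> \<rho>" using z f(2) by (simp add: dist_norm norm_minus_commute)
    finally have "f \<bullet> z \<ge> 0" using \<open>f \<bullet> d \<ge> \<rho>\<close> by (simp add: inner_diff_right)
    then show False using f by simp
  qed
qed

lemma round_point:
  fixes y :: "real^'n"
  shows "\<exists>x\<in>int_points. norm (x - y) \<le> sqrt (real CARD('n)) / 2"
proof -
  define x :: "real^'n" where "x = (\<chi> i. of_int (round (y $ i)))"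
  have "x \<in> int_points" by (simp add: x_def int_points_def)
  moreover have "norm (x - y) \<le> sqrt (real CARD('n)) / 2"
  proof -
    have "norm (x - y) = sqrt (\<Sum>i\<in>UNIV. (norm ((x - y) $ i))^2)"
      by (simp add: norm_vec_def L2_set_def)
    also have "\<dots> \<le> sqrt (\<Sum>i\<in>(UNIV::'n set). (1/2)^2)"
    proof (rule real_sqrt_le_mono, rule sum_mono)
      fix i
      have "norm ((x - y) $ i) \<le> 1/2" using of_int_round_abs_le[of "y $ i"]
        by (simp add: x_def)
      then show "(norm ((x - y) $ i))^2 \<le> (1/2)^2"
        by (intro power_mono) auto
    qed
    also have "\<dots> = sqrt (real CARD('n)) / 2"
      by (simp add: real_sqrt_mult real_sqrt_divide power2_eq_square)
    finally show ?thesis .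
  qed
  ultimately show ?thesis by blast
qed

theorem theorem4p2:
  fixes S :: "(real^'n) set"
  assumes "convex S"
    and "regular_cone (rec_cone S)"
  shows "(\<forall>xh\<in>S.
            (INF x\<in>S \<inter> int_points. norm (x - xh))
               \<le> sqrt (real CARD('n)) / 2 * (1 / Psi (rec_cone S) + 1)
          \<and> (\<exists>x\<in>S \<inter> int_points.
               norm (x - xh) \<le> sqrt (real CARD('n)) / 2 * (1 / Psi (rec_cone S) + 1)))
       \<and> (\<forall>\<alpha>::real^'n. bdd_below ((\<lambda>x. \<alpha> \<bullet> x) ` S) \<longrightarrow>
            (INF x\<in>S \<inter> int_points. \<alpha> \<bullet> x) - (INF x\<in>S. \<alpha> \<bullet> x)
              \<le> norm \<alpha> * (sqrt (real CARD('n)) / 2 * (1 / Psi (rec_cone S) + 1)))"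
proof -
  define K where "K = rec_cone S"
  define P where "P = Psi K"
  define r where "r = sqrt (real CARD('n)) / 2"
  define B where "B = r * (1 / P + 1)"
  have reg: "cone K" "interior K \<noteq> {}" "closed K" "convex K" "K \<inter> uminus ` K = {0}"
  proof -
    have R: "cone K \<and> interior K \<noteq> {} \<and> closed K \<and> convex K \<and> K \<inter> uminus ` K = {0}"
      using assms(2) unfolding K_def regular_cone_def .
    show "cone K" "interior K \<noteq> {}" "closed K" "convex K" "K \<inter> uminus ` K = {0}"
      using R by blast+
  qed
  have Kne: "K \<noteq> {}" using reg(2) by (metis interior_empty)
  have inS: "xh + v \<in> S" if "xh \<in> S" "v \<in> K" for xh v
  proof -
    have "\<forall>x\<in>S. \<forall>t::real. t \<ge> 0 \<longrightarrow> x + t *\<^sub>R v \<in> S"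
      using that(2) unfolding K_def rec_cone_def by blast
    then have "xh + 1 *\<^sub>R v \<in> S" using that(1) zero_le_one by blast
    then show ?thesis by simp
  qed
  have pointed: "v = 0" if "v \<in> K" "- v \<in> K" for v
  proof -
    have "v \<in> uminus ` K" using that(2) by (metis add.inverse_inverse image_eqI)
    then show ?thesis using that(1) reg(5) by blast
  qed
  define U where "U = {f \<in> dual_cone K. norm f = 1}"
  define g where "g d = (INF f\<in>U. f \<bullet> d)" for d :: "real^'n"
  define D where "D = {d \<in> K. norm d = 1}"
  have PD: "P = (SUP d\<in>D. g d)" by (simp add: P_def Psi_def U_def g_def D_def)
  define e1 :: "real^'n" where "e1 = axis undefined 1"
  have e1n: "e1 \<noteq> 0" by (simp add: e1_def)
  have "\<not> (e1 \<in> K \<and> - e1 \<in> K)" using pointed e1n by blast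
  then obtain z where "z \<notin> K" by blast
  then obtain f0 where f0: "f0 \<in> U" using dual_exists[OF reg(1,3,4) Kne] by (auto simp: U_def)
  have Une: "U \<noteq> {}" using f0 by blast
  have bdd: "bdd_below ((\<lambda>f. f \<bullet> d) ` U)" for d
  proof (rule bdd_belowI2[where m="- norm d"])
    fix f assume "f \<in> U"
    then have "\<bar>f \<bullet> d\<bar> \<le> norm d" using Cauchy_Schwarz_ineq2[of f d] by (simp add: U_def)
    then show "- norm d \<le> f \<bullet> d" by simp
  qed
  have g_le: "g d \<le> f \<bullet> d" if "f \<in> U" for f d
    unfolding g_def by (rule cINF_lower[OF bdd that])
  have g_ge: "\<rho> \<le> g d" if "\<And>f. f \<in> U \<Longrightarrow> \<rho> \<le> f \<bullet> d" for \<rho> d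
    unfolding g_def by (rule cINF_greatest[OF Une that])
  have g_lip: "g d \<le> g d' + dist d d'" for d d'
  proof -
    have "g d - dist d d' \<le> f \<bullet> d'" if "f \<in> U" for f
    proof -
      have "\<bar>f \<bullet> (d - d')\<bar> \<le> norm (d - d')" using Cauchy_Schwarz_ineq2[of f "d - d'"] that
        by (simp add: U_def)
      then show ?thesis using g_le[OF that, of d] by (simp add: dist_norm inner_diff_right)
    qed
    then have "g d - dist d d' \<le> g d'" by (rule g_ge)
    then show ?thesis by simp
  qed
  have gcont: "continuous_on D g"
  proof (rule lipschitz_on_continuous_on)
    show "1-lipschitz_on D g"
    proof (rule lipschitz_onI)
      fix x y
      show "dist (g x) (g y) \<le> 1 * dist x y"
        using g_lip[of x y] g_lip[of y x] by (simp add: dist_real_def dist_commute abs_le_iff)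
    qed simp
  qed
  have Dcomp: "compact D"
  proof -
    have "D = K \<inter> sphere 0 1" by (auto simp: D_def)
    then show ?thesis using reg(3) by (simp add: closed_Int_compact)
  qed
  obtain y where y: "y \<in> interior K" using reg(2) by blast
  then obtain e where e: "e > 0" "ball y e \<subseteq> K" using mem_interior by blast
  have y0: "y \<noteq> 0"
  proof
    assume "y = 0"
    define v where "v = (e/2) *\<^sub>R e1"
    have nv: "norm v = e/2" using e(1) by (simp add: v_def e1_def)
    have "v \<in> K" "- v \<in> K" using e nv \<open>y = 0\<close> by (auto intro!: subsetD[OF e(2)])
    then have "v = 0" by (rule pointed)
    then show False using nv e(1) by simp
  qed
  define d0 where "d0 = y /\<^sub>R norm y"
  have yK: "y \<in> K" using e by auto
  have d0D: "d0 \<in> D" using y0 yK reg(1) by (auto simp: D_def d0_def cone_def)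
  have Dne: "D \<noteq> {}" using d0D by blast
  have gd0: "e / 2 / norm y \<le> g d0"
  proof (rule g_ge)
    fix f assume f: "f \<in> U"
    have "y - (e/2) *\<^sub>R f \<in> ball y e" using f e(1) by (simp add: U_def dist_norm)
    then have "y - (e/2) *\<^sub>R f \<in> K" using e(2) by blast
    then have "0 \<le> f \<bullet> (y - (e/2) *\<^sub>R f)" using f by (simp add: U_def dual_cone_def)
    also have "\<dots> = f \<bullet> y - e/2" using f by (simp add: U_def inner_diff_right dot_square_norm)
    finally have "e/2 \<le> f \<bullet> y" by simp
    then show "e / 2 / norm y \<le> f \<bullet> d0" using y0
      by (simp add: d0_def divide_simps)
  qed
  obtain ds where ds: "ds \<in> D" "\<And>d. d \<in> D \<Longrightarrow> g d \<le> g ds"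
    using continuous_attains_sup[OF Dcomp Dne gcont] by blast
  have Pds: "P = g ds" unfolding PD using ds by (intro cSup_eq_maximum) auto
  have Ppos: "P > 0"
  proof -
    have "0 < e / 2 / norm y" using e(1) y0 by simp
    also have "\<dots> \<le> g d0" by (rule gd0)
    also have "\<dots> \<le> P" using ds(2)[OF d0D] Pds by simp
    finally show ?thesis .
  qed
  have r0: "r \<ge> 0" by (simp add: r_def)
  have key: "\<exists>x\<in>S \<inter> int_points. norm (x - xh) \<le> B" if xh: "xh \<in> S" for xh
  proof -
    define t where "t = r / P"
    have t0: "t \<ge> 0" using r0 Ppos by (simp add: t_def)
    have "cball (t *\<^sub>R ds) r \<subseteq> K"
    proof (rule cone_ball[OF reg(1,3,4) Kne])
      fix f assume f: "f \<in> dual_cone K" "norm f = 1"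
      then have "P \<le> f \<bullet> ds" using g_le[of f ds] Pds by (simp add: U_def)
      then have "t * P \<le> t * (f \<bullet> ds)" using t0 by (rule mult_left_mono)
      moreover have "t * P = r" using Ppos by (simp add: t_def)
      ultimately show "r \<le> f \<bullet> (t *\<^sub>R ds)" by simp
    qed
    obtain x where x: "x \<in> int_points" "norm (x - (xh + t *\<^sub>R ds)) \<le> r"
      using round_point[of "xh + t *\<^sub>R ds"] by (auto simp: r_def)
    have "x - xh \<in> cball (t *\<^sub>R ds) r" using x(2)
      by (simp add: dist_norm norm_minus_commute algebra_simps)
    then have "x - xh \<in> K" using \<open>cball (t *\<^sub>R ds) r \<subseteq> K\<close> by blast
    then have "xh + (x - xh) \<in> S" by (rule inS[OF xh])
    then have xS: "x \<in> S" by simp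
    have "norm (x - xh) \<le> norm (x - (xh + t *\<^sub>R ds)) + norm (t *\<^sub>R ds)"
      by (metis diff_add_cancel diff_diff_eq norm_triangle_ineq)
    also have "\<dots> \<le> r + t" using x(2) ds(1) t0 by (simp add: D_def)
    also have "r + t = B" using Ppos by (simp add: B_def t_def algebra_simps)
    finally show ?thesis using xS x(1) by blast
  qed
  have part1: "\<forall>xh\<in>S. (INF x\<in>S \<inter> int_points. norm (x - xh)) \<le> B
          \<and> (\<exists>x\<in>S \<inter> int_points. norm (x - xh) \<le> B)"
  proof
    fix xh assume xh: "xh \<in> S"
    obtain x where x: "x \<in> S \<inter> int_points" "norm (x - xh) \<le> B" using key[OF xh] by blast
    have "(INF x\<in>S \<inter> int_points. norm (x - xh)) \<le> norm (x - xh)"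
      by (rule cINF_lower[OF _ x(1)]) (auto intro: bdd_belowI2[where m=0])
    then show "(INF x\<in>S \<inter> int_points. norm (x - xh)) \<le> B
          \<and> (\<exists>x\<in>S \<inter> int_points. norm (x - xh) \<le> B)" using x by auto
  qed
  have part2: "\<forall>\<alpha>::real^'n. bdd_below ((\<lambda>x. \<alpha> \<bullet> x) ` S) \<longrightarrow>
            (INF x\<in>S \<inter> int_points. \<alpha> \<bullet> x) - (INF x\<in>S. \<alpha> \<bullet> x) \<le> norm \<alpha> * B"
  proof (intro allI impI)
    fix \<alpha> :: "real^'n" assume bb: "bdd_below ((\<lambda>x. \<alpha> \<bullet> x) ` S)"
    have Sne: "S \<noteq> {}"
    proof
      assume "S = {}"
      then have "e1 \<in> K" "- e1 \<in> K" by (auto simp: K_def rec_cone_def)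
      then show False using pointed e1n by blast
    qed
    have bb2: "bdd_below ((\<lambda>x. \<alpha> \<bullet> x) ` (S \<inter> int_points))"
      using bb by (rule bdd_below_mono) auto
    show "(INF x\<in>S \<inter> int_points. \<alpha> \<bullet> x) - (INF x\<in>S. \<alpha> \<bullet> x) \<le> norm \<alpha> * B"
    proof (rule field_le_epsilon)
      fix \<epsilon> :: real assume \<epsilon>: "\<epsilon> > 0"
      have "(INF x\<in>S. \<alpha> \<bullet> x) < (INF x\<in>S. \<alpha> \<bullet> x) + \<epsilon>" using \<epsilon> by simp
      then obtain xh where xh: "xh \<in> S" "\<alpha> \<bullet> xh < (INF x\<in>S. \<alpha> \<bullet> x) + \<epsilon>"
        using cINF_less_iff[OF Sne bb] by blast
      obtain x where x: "x \<in> S \<inter> int_points" "norm (x - xh) \<le> B" using key[OF xh(1)] by blast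
      have "(INF x\<in>S \<inter> int_points. \<alpha> \<bullet> x) \<le> \<alpha> \<bullet> x" by (rule cINF_lower[OF bb2 x(1)])
      also have "\<alpha> \<bullet> x = \<alpha> \<bullet> xh + \<alpha> \<bullet> (x - xh)" by (simp add: inner_diff_right)
      also have "\<alpha> \<bullet> (x - xh) \<le> norm \<alpha> * B"
      proof -
        have "\<alpha> \<bullet> (x - xh) \<le> norm \<alpha> * norm (x - xh)" by (rule Cauchy_Schwarz_ineq2[THEN abs_le_D1])
        also have "\<dots> \<le> norm \<alpha> * B" using x(2) by (simp add: mult_left_mono)
        finally show ?thesis .
      qed
      finally show "(INF x\<in>S \<inter> int_points. \<alpha> \<bullet> x) - (INF x\<in>S. \<alpha> \<bullet> x) \<le> norm \<alpha> * B + \<epsilon>"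
        using xh(2) by simp
    qed
  qed
  show ?thesis using part1 part2 by (simp add: B_def r_def P_def K_def)
qed

end
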